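(* Consider the power-market model described in the context, fix a day $k$, a parameter $\eta>0$ and the queue state $\mathbf{Q}(t_k)$. For a price vector $\mathbf{p}(k)=(p(k,t))_{t=0}^{T-1}\in\mathcal{P}$ define $$\Phi(\mathbf{p}(k))=\sum_{t=0}^{T-1}\mathbb{E}\Big[\eta\sum_{n=1}^N U_n(L_n(k,t),t)-\eta\,\text{Cost}(k,t)+\sum_n Q_n(t_k+t)\,L^{\mathsf{d}}_n(p(k,t),t)\,\Big|\,\mathbf{Q}(t_k)\Big],$$ $$\Phi^{\mathsf{A}}(\mathbf{p}(k))=\sum_{t=0}^{T-1}\mathbb{E}\Big[\eta\sum_{n=1}^N U_n(L_n(k,t),t)-\eta\,\text{Cost}(k,t)+\sum_n Q_n(t_k)\,L^{\mathsf{d}}_n(p(k,t),t)\,\Big|\,\mathbf{Q}(t_k)\Big],$$ where the loads are those induced by the prices. Let $\Phi^*$ be the maximum of $\Phi$ over $\mathcal{P}$ and let $\mathbf{p}^{\mathsf{A}}(k)$ be a maximizer of $\Phi^{\mathsf{A}}$ over $\mathcal{P}$. Then $$\Phi^{\mathsf{A}}(\mathbf{p}^{\mathsf{A}}(k))\ge \Phi^*-TC_0,\qquad C_0=\frac{T-1}{2}\sum_n\big([L_n^{\max}]^2+[L_n^{\mathsf{av}}]^2\big).$$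
   Context: Days $k=0,1,\dots$ are divided into $T$ slots, $t_k=kT$. The utility company chooses user prices $\mathbf{p}(k)=(p(k,t))_t$ from a compact set $\mathcal{P}\subseteq[0,p_{\max}]^T$. Each of $N$ users has an increasing continuous utility $U_n(L,t)$; given price $p(k,t)$, user $n$ chooses the intended load $L^{\mathsf{d}}_n(p(k,t),t)$ as the smallest maximizer over $L\in[L_n^{\min}(t),L_n^{\mathsf{d},\max}]$ of $\mathbb{E}[U_n(L+w_n(k,t),t)-p(k,t)(L+w_n(k,t))]$, and actually consumes $L_n(k,t)=L^{\mathsf{d}}_n(k,t)+w_n(k,t)$ with $w_n$ zero-mean random deviations, where $0\le L_n(k,t)\le L_n^{\max}$. $\text{Cost}(k,t)=\beta(k,t)B(k,t)+\alpha(k,t)[L(k,t)-B(k,t)-X(k,t)]^+$ is the power procurement cost ($X$ renewable power, $B$ base-power bought at day-ahead price $\beta$, deficit bought at real-time price $\alpha$, $L=\sum_n L_n$). Deficit queues: $Q_n(0)=0$, $Q_n(t_k+t+1)=[Q_n(t_k+t)-L_n(k,t)]^++L_n^{\mathsf{av}}$, with constants $L_n^{\mathsf{av}}\ge0$; $\mathbf{Q}=(Q_n)_n$. *)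

theory Defs
  imports "HOL-Probability.Probability"
begin

text \<open>Actual load of user n in slot t of the fixed day, under price vector p
  (indexed by slots): intended load at price p t plus the random deviation.\<close>
definition load :: "(nat \<Rightarrow> nat \<Rightarrow> real \<Rightarrow> real) \<Rightarrow> (nat \<Rightarrow> nat \<Rightarrow> 'a \<Rightarrow> real)
    \<Rightarrow> (nat \<Rightarrow> real) \<Rightarrow> nat \<Rightarrow> nat \<Rightarrow> 'a \<Rightarrow> real" where
  "load Ld w p n t x = Ld n t (p t) + w n t x"

text \<open>Deficit queue within the fixed day: queue q0 Lav L n t x is Q_n(t_k + t),
  starting from the given state Q_n(t_k) = q0 n.\<close>
fun queue :: "(nat \<Rightarrow> real) \<Rightarrow> (nat \<Rightarrow> real) \<Rightarrow> (nat \<Rightarrow> nat \<Rightarrow> 'a \<Rightarrow> real)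
    \<Rightarrow> nat \<Rightarrow> nat \<Rightarrow> 'a \<Rightarrow> real" where
  "queue q0 Lav L n 0 x = q0 n"
| "queue q0 Lav L n (Suc t) x = max (queue q0 Lav L n t x - L n t x) 0 + Lav n"

definition cost :: "(nat \<Rightarrow> real) \<Rightarrow> (nat \<Rightarrow> real) \<Rightarrow> (nat \<Rightarrow> 'a \<Rightarrow> real)
    \<Rightarrow> (nat \<Rightarrow> 'a \<Rightarrow> real) \<Rightarrow> real \<Rightarrow> nat \<Rightarrow> 'a \<Rightarrow> real" where
  "cost beta B alpha X Ltot t x = beta t * B t + alpha t x * max (Ltot - B t - X t x) 0"

definition objective :: "'a measure \<Rightarrow> nat \<Rightarrow> nat \<Rightarrow> real \<Rightarrow> (nat \<Rightarrow> real \<Rightarrow> nat \<Rightarrow> real)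
    \<Rightarrow> (nat \<Rightarrow> nat \<Rightarrow> real \<Rightarrow> real) \<Rightarrow> (nat \<Rightarrow> nat \<Rightarrow> 'a \<Rightarrow> real)
    \<Rightarrow> (nat \<Rightarrow> real) \<Rightarrow> (nat \<Rightarrow> real) \<Rightarrow> (nat \<Rightarrow> 'a \<Rightarrow> real) \<Rightarrow> (nat \<Rightarrow> 'a \<Rightarrow> real)
    \<Rightarrow> (nat \<Rightarrow> nat \<Rightarrow> 'a \<Rightarrow> real) \<Rightarrow> (nat \<Rightarrow> real) \<Rightarrow> real" where
  "objective M N T eta U Ld w beta B alpha X Qw p =
     (\<Sum>t<T. integral\<^sup>L M (\<lambda>x.
        eta * (\<Sum>n<N. U n (load Ld w p n t x) t)
        - eta * cost beta B alpha X (\<Sum>n<N. load Ld w p n t x) t x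
        + (\<Sum>n<N. Qw n t x * Ld n t (p t))))"

definition Phi where
  "Phi M N T eta U Ld w beta B alpha X q0 Lav p =
     objective M N T eta U Ld w beta B alpha X (queue q0 Lav (load Ld w p)) p"

definition PhiA where
  "PhiA M N T eta U Ld w beta B alpha X q0 p =
     objective M N T eta U Ld w beta B alpha X (\<lambda>n t x. q0 n) p"

definition least_maximizer :: "real set \<Rightarrow> (real \<Rightarrow> real) \<Rightarrow> real \<Rightarrow> bool" where
  "least_maximizer S g l \<longleftrightarrow> l \<in> S \<and> (\<forall>l'\<in>S. g l' \<le> g l) \<and> (\<forall>l'\<in>S. g l' = g l \<longrightarrow> l \<le> l')"

end

theory Submission
  imports Defs
begin

lemma int_diff_aux:
  fixes f g h :: "'a \<Rightarrow> real"
  assumes "integrable M g" "integrable M h" "prob_space M"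
    and "\<And>x. x \<in> space M \<Longrightarrow> g x - h x \<le> c" "0 \<le> c"
  shows "integral\<^sup>L M (\<lambda>x. f x + g x) - integral\<^sup>L M (\<lambda>x. f x + h x) \<le> c"
proof (cases "integrable M f")
  case True
  have "integral\<^sup>L M (\<lambda>x. g x - h x) \<le> integral\<^sup>L M (\<lambda>x. c)"
    apply (rule integral_mono) using assms by (auto simp: prob_space.finite_measure finite_measure.integrable_const)
  also have "\<dots> = c" using assms(3) by (simp add: prob_space.prob_space)
  finally show ?thesis using True assms by simp
next
  case False
  have 1: "\<not> integrable M (\<lambda>x. f x + g x)"
  proof
    assume "integrable M (\<lambda>x. f x + g x)"
    then have "integrable M (\<lambda>x. (f x + g x) - g x)" using assms(1) by (rule Bochner_Integration.integrable_diff)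
    then show False using False by simp
  qed
  have 2: "\<not> integrable M (\<lambda>x. f x + h x)"
  proof
    assume "integrable M (\<lambda>x. f x + h x)"
    then have "integrable M (\<lambda>x. (f x + h x) - h x)" using assms(2) by (rule Bochner_Integration.integrable_diff)
    then show False using False by simp
  qed
  show ?thesis using 1 2 assms by (simp add: not_integrable_integral_eq)
qed

theorem lemma4:
  fixes M :: "'a measure" and N T :: nat and eta pmax :: real
    and U :: "nat \<Rightarrow> real \<Rightarrow> nat \<Rightarrow> real"
    and Lmin :: "nat \<Rightarrow> nat \<Rightarrow> real" and Ldmax Lmax Lav q0 :: "nat \<Rightarrow> real"
    and Ld :: "nat \<Rightarrow> nat \<Rightarrow> real \<Rightarrow> real" and w :: "nat \<Rightarrow> nat \<Rightarrow> 'a \<Rightarrow> real"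
    and beta B :: "nat \<Rightarrow> real" and alpha X :: "nat \<Rightarrow> 'a \<Rightarrow> real"
    and P :: "(nat \<Rightarrow> real) set" and pstar pA :: "nat \<Rightarrow> real"
  assumes "prob_space M"
    and P_sub: "P \<subseteq> {p. \<forall>t. (t < T \<longrightarrow> 0 \<le> p t \<and> p t \<le> pmax) \<and> (T \<le> t \<longrightarrow> p t = 0)}"
    and "compact P"
    and "eta > 0"
    and U_props: "\<forall>n<N. \<forall>t<T. mono (\<lambda>L. U n L t) \<and> continuous_on UNIV (\<lambda>L. U n L t)"
    and w_meas: "\<forall>n<N. \<forall>t<T. w n t \<in> borel_measurable M \<and> integrable M (w n t)
                   \<and> integral\<^sup>L M (w n t) = 0"
    and Lav_nonneg: "\<forall>n<N. 0 \<le> Lav n"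
    and q0_nonneg: "\<forall>n<N. 0 \<le> q0 n"
    and Ld_def: "\<forall>n<N. \<forall>t<T. \<forall>pr\<in>{0..pmax}.
        least_maximizer {Lmin n t..Ldmax n}
          (\<lambda>l. integral\<^sup>L M (\<lambda>x. U n (l + w n t x) t - pr * (l + w n t x))) (Ld n t pr)"
    and L_bounds: "\<forall>n<N. \<forall>t<T. \<forall>pr\<in>{0..pmax}. \<forall>x\<in>space M.
        0 \<le> Ld n t pr + w n t x \<and> Ld n t pr + w n t x \<le> Lmax n"
    and pstar_max: "pstar \<in> P" "\<forall>p\<in>P. Phi M N T eta U Ld w beta B alpha X q0 Lav p
                                 \<le> Phi M N T eta U Ld w beta B alpha X q0 Lav pstar"
    and pA_max: "pA \<in> P" "\<forall>p\<in>P. PhiA M N T eta U Ld w beta B alpha X q0 p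
                                 \<le> PhiA M N T eta U Ld w beta B alpha X q0 pA"
  shows "PhiA M N T eta U Ld w beta B alpha X q0 pA
           \<ge> Phi M N T eta U Ld w beta B alpha X q0 Lav pstar
             - real T * ((real T - 1) / 2 * (\<Sum>n<N. (Lmax n)^2 + (Lav n)^2))"
proof -
  interpret prob_space M by fact
  define p where "p = pstar"
  define L where "L = load Ld w p"
  define S where "S = (\<Sum>n<N. (Lmax n)^2 + (Lav n)^2)"
  define Q where "Q = queue q0 Lav L"
  have S0: "0 \<le> S" unfolding S_def by (intro sum_nonneg) auto
  have pt: "0 \<le> p t \<and> p t \<le> pmax" if "t < T" for t
    using P_sub pstar_max(1) that unfolding p_def by auto
  have Lb: "0 \<le> L n t x \<and> L n t x \<le> Lmax n" if "n < N" "t < T" "x \<in> space M" for n t x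
    using L_bounds pt[OF that(2)] that unfolding L_def load_def by auto
  have wint: "integral\<^sup>L M (\<lambda>x. c + w n t x) = c" if "n < N" "t < T" for c n t
    using w_meas that by (simp add: prob_space)
  have Ldb: "0 \<le> Ld n t (p t) \<and> Ld n t (p t) \<le> Lmax n" if "n < N" "t < T" for n t
  proof -
    have i: "integrable M (\<lambda>x. Ld n t (p t) + w n t x)" using w_meas that by auto
    have "integral\<^sup>L M (\<lambda>x. 0) \<le> integral\<^sup>L M (\<lambda>x. Ld n t (p t) + w n t x)"
      apply (rule integral_mono) using i Lb[OF that] unfolding L_def load_def by auto
    moreover have "integral\<^sup>L M (\<lambda>x. Ld n t (p t) + w n t x) \<le> integral\<^sup>L M (\<lambda>x. Lmax n)"
      apply (rule integral_mono) using i Lb[OF that] unfolding L_def load_def by auto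
    ultimately show ?thesis using wint[OF that] by (simp add: prob_space)
  qed
  have Qb: "0 \<le> Q n t x \<and> Q n t x \<le> q0 n + real t * Lav n" if "n < N" "t \<le> T" "x \<in> space M" for n t x
    using that(2)
  proof (induction t)
    case 0 then show ?case using q0_nonneg that unfolding Q_def by simp
  next
    case (Suc t)
    then have "t < T" by simp
    note IH = Suc.IH[OF less_imp_le[OF this]]
    have "0 \<le> L n t x" using Lb[OF that(1) \<open>t<T\<close> that(3)] by simp
    then show ?case using IH Lav_nonneg that(1) unfolding Q_def by (auto simp: algebra_simps)
  qed
  have Lm: "L n t \<in> borel_measurable M" if "n < N" "t < T" for n t
  proof -
    have "w n t \<in> borel_measurable M" using w_meas that by auto
    then show ?thesis unfolding L_def load_def by measurable
  qed
  have Qm: "Q n t \<in> borel_measurable M" if "n < N" "t \<le> T" for n t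
    using that(2)
  proof (induction t)
    case 0 then show ?case unfolding Q_def by simp
  next
    case (Suc t)
    then have "t < T" by simp
    have "(\<lambda>x. max (Q n t x - L n t x) 0 + Lav n) \<in> borel_measurable M"
      using Suc.IH \<open>t<T\<close> Lm[OF that(1) \<open>t<T\<close>] by auto
    then show ?case unfolding Q_def by simp
  qed
  define c where "c = (real T - 1) / 2 * S"
  have step: "integral\<^sup>L M (\<lambda>x. eta * (\<Sum>n<N. U n (L n t x) t)
        - eta * cost beta B alpha X (\<Sum>n<N. L n t x) t x + (\<Sum>n<N. Q n t x * Ld n t (p t)))
      - integral\<^sup>L M (\<lambda>x. eta * (\<Sum>n<N. U n (L n t x) t)
        - eta * cost beta B alpha X (\<Sum>n<N. L n t x) t x + (\<Sum>n<N. q0 n * Ld n t (p t))) \<le> c"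
    if "t < T" for t
  proof (rule int_diff_aux)
    show "integrable M (\<lambda>x. \<Sum>n<N. q0 n * Ld n t (p t))" by simp
    show "prob_space M" by fact
    show "0 \<le> c" unfolding c_def using S0 that by simp
    show "integrable M (\<lambda>x. \<Sum>n<N. Q n t x * Ld n t (p t))"
    proof (rule Bochner_Integration.integrable_sum)
      fix n assume n: "n \<in> {..<N}"
      have "integrable M (Q n t)"
      proof (rule integrable_const_bound[where B="q0 n + real t * Lav n"])
        show "Q n t \<in> borel_measurable M" using Qm n that by simp
        show "AE x in M. norm (Q n t x) \<le> q0 n + real t * Lav n"
          using Qb n that by (intro AE_I2) fastforce
      qed
      then show "integrable M (\<lambda>x. Q n t x * Ld n t (p t))" by simp
    qed
    fix x assume x: "x \<in> space M"
    have "(\<Sum>n<N. Q n t x * Ld n t (p t)) - (\<Sum>n<N. q0 n * Ld n t (p t))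
          = (\<Sum>n<N. (Q n t x - q0 n) * Ld n t (p t))"
      by (simp add: sum_subtractf algebra_simps)
    also have "\<dots> \<le> (\<Sum>n<N. (real T - 1) / 2 * ((Lmax n)^2 + (Lav n)^2))"
    proof (rule sum_mono)
      fix n assume n: "n \<in> {..<N}"
      have q: "Q n t x - q0 n \<le> real t * Lav n" "0 \<le> Q n t x"
        using Qb[of n t x] n that x by auto
      have l: "0 \<le> Ld n t (p t)" "Ld n t (p t) \<le> Lmax n" using Ldb n that by auto
      have la: "0 \<le> Lav n" using Lav_nonneg n by auto
      have "(Q n t x - q0 n) * Ld n t (p t) \<le> (real t * Lav n) * Ld n t (p t)"
        using q l by (intro mult_right_mono) auto
      also have "\<dots> \<le> real t * Lav n * Lmax n"
        using l la by (intro mult_left_mono) auto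
      also have "\<dots> \<le> real t * (((Lmax n)^2 + (Lav n)^2) / 2)"
      proof -
        have "Lav n * Lmax n \<le> ((Lmax n)^2 + (Lav n)^2) / 2"
          using sum_squares_ge_zero[of "Lmax n - Lav n" 0]
          by (simp add: power2_eq_square algebra_simps)
        then have "real t * (Lav n * Lmax n) \<le> real t * (((Lmax n)^2 + (Lav n)^2) / 2)"
          by (intro mult_left_mono) auto
        then show ?thesis by (simp add: mult.assoc)
      qed
      also have "\<dots> \<le> (real T - 1) / 2 * ((Lmax n)^2 + (Lav n)^2)"
      proof -
        have "real t \<le> real T - 1" using that by linarith
        moreover have "0 \<le> (Lmax n)^2 + (Lav n)^2" by simp
        ultimately have "real t * ((Lmax n)^2 + (Lav n)^2) \<le> (real T - 1) * ((Lmax n)^2 + (Lav n)^2)"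
          by (rule mult_right_mono)
        then show ?thesis by simp
      qed
      finally show "(Q n t x - q0 n) * Ld n t (p t) \<le> (real T - 1) / 2 * ((Lmax n)^2 + (Lav n)^2)" .
    qed
    also have "\<dots> = c" unfolding c_def S_def by (simp add: sum_distrib_left)
    finally show "(\<Sum>n<N. Q n t x * Ld n t (p t)) - (\<Sum>n<N. q0 n * Ld n t (p t)) \<le> c" .
  qed
  have "Phi M N T eta U Ld w beta B alpha X q0 Lav pstar - PhiA M N T eta U Ld w beta B alpha X q0 pstar
      \<le> (\<Sum>t<T. c)"
    unfolding Phi_def PhiA_def objective_def sum_subtractf[symmetric]
    using step unfolding p_def L_def Q_def by (intro sum_mono) auto
  moreover have "PhiA M N T eta U Ld w beta B alpha X q0 pstar \<le> PhiA M N T eta U Ld w beta B alpha X q0 pA"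
    using pA_max pstar_max by auto
  ultimately show ?thesis unfolding c_def S_def by simp
qed

end
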